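(* Let $n\ge 1$ and let $L_1,L_2,\underline b>0$ be constants. Let $\mathcal{F}_{L_1,L_2,\underline b}$ be the set of all $f\in C^1(\mathbb{R}^{3n},\mathbb{R}^n)$, $f=f(x_1,x_2,u)$ with $x_1,x_2,u\in\mathbb{R}^n$, such that for all $x_1,x_2,u\in\mathbb{R}^n$: $\left\|\frac{\partial f}{\partial x_1}\right\|\le L_1$, $\left\|\frac{\partial f}{\partial x_2}\right\|\le L_2$, and $\mathrm{Sym}\left[\frac{\partial f}{\partial u}\right]\ge \underline b I_n$. Let $$\Omega_{pid}=\left\{(k_p,k_i,k_d)\in(0,\infty)^3 \;:\; k_p^2>2k_ik_d+\bar k,\ \ k_d^2>k_p/\underline b+\bar k\right\},\qquad \bar k=(L_1+L_2)(k_p+k_d)/\underline b .$$ Consider the closed-loop system $$\dot x_1=x_2,\quad \dot x_2=f(x_1,x_2,u),\quad u(t)=k_pe(t)+k_i\int_0^t e(s)\,ds+k_d\dot e(t),\quad e(t)=y^*-x_1(t),$$ with setpoint $y^*\in\mathbb{R}^n$. Then for any $(k_p,k_i,k_d)\in\Omega_{pid}$ there exist constants $M>0$ and $\lambda>0$, depending only on $(k_p,k_i,k_d,L_1,L_2,\underline b)$, such that for every $f\in\mathcal{F}_{L_1,L_2,\underline b}$, every $y^*\in\mathbb{R}^n$ and every initial state $(x_1(0),x_2(0))\in\mathbb{R}^{2n}$, the algebraic equation $f(y^*,0,u)=0$ has a unique solution $u^*\in\mathbb{R}^n$ and the solution of the closed-loop system satisfies $$\|e(t)\|+\|\dot e(t)\|\le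 Me^{-\lambda t}\left(\|e(0)\|+\|\dot e(0)\|+\|u^*\|\right)\quad\text{for all } t\ge 0.$$
   Context: $\|\cdot\|$ denotes the Euclidean norm of vectors and the induced operator norm of matrices. For a square matrix $P$, $\mathrm{Sym}[P]=(P+P^{\mathsf T})/2$. For symmetric matrices $S_1,S_2$, $S_1\ge S_2$ means $S_1-S_2$ is positive semidefinite. $\frac{\partial f}{\partial x_1},\frac{\partial f}{\partial x_2},\frac{\partial f}{\partial u}$ are the $n\times n$ Jacobian matrices of $f$ with respect to $x_1,x_2,u$. $I_n$ is the $n\times n$ identity matrix. *)

theory Defs
  imports "HOL-Analysis.Analysis"
begin

definition Sym :: "real^'n^'n \<Rightarrow> real^'n^'n" where
  "Sym P = (1/2) *\<^sub>R (P + transpose P)"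

definition psd :: "real^'n^'n \<Rightarrow> bool" where
  "psd S \<longleftrightarrow> (\<forall>v. 0 \<le> v \<bullet> (S *v v))"

definition mat_ge :: "real^'n^'n \<Rightarrow> real^'n^'n \<Rightarrow> bool" where
  "mat_ge S1 S2 \<longleftrightarrow> psd (S1 - S2)"

definition opnorm :: "real^'n^'m \<Rightarrow> real" where
  "opnorm A = onorm (\<lambda>h. A *v h)"

text \<open>The class F_{L1,L2,b}: C^1 maps f(x1,x2,u) whose partial Jacobians
  J1 = df/dx1, J2 = df/dx2, J3 = df/du (the blocks of the total derivative,
  which are continuous) satisfy the bounds.\<close>
definition F_class :: "real \<Rightarrow> real \<Rightarrow> real \<Rightarrow>
    (real^'n \<Rightarrow> real^'n \<Rightarrow> real^'n \<Rightarrow> real^'n) set" where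
  "F_class L1 L2 b = {f. \<exists>J1 J2 J3 :: real^'n \<Rightarrow> real^'n \<Rightarrow> real^'n \<Rightarrow> real^'n^'n.
      (\<forall>x1 x2 u. ((\<lambda>(a, c, d). f a c d) has_derivative
          (\<lambda>(h1, h2, h3). J1 x1 x2 u *v h1 + J2 x1 x2 u *v h2 + J3 x1 x2 u *v h3))
          (at (x1, x2, u))) \<and>
      continuous_on UNIV (\<lambda>(a, c, d). J1 a c d) \<and>
      continuous_on UNIV (\<lambda>(a, c, d). J2 a c d) \<and>
      continuous_on UNIV (\<lambda>(a, c, d). J3 a c d) \<and>
      (\<forall>x1 x2 u. opnorm (J1 x1 x2 u) \<le> L1 \<and> opnorm (J2 x1 x2 u) \<le> L2 \<and>
                  mat_ge (Sym (J3 x1 x2 u)) (b *\<^sub>R mat 1))}"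

definition Omega_pid :: "real \<Rightarrow> real \<Rightarrow> real \<Rightarrow> (real \<times> real \<times> real) set" where
  "Omega_pid L1 L2 b = {(kp, ki, kd). 0 < kp \<and> 0 < ki \<and> 0 < kd \<and>
      (let kbar = (L1 + L2) * (kp + kd) / b in
        kp^2 > 2 * ki * kd + kbar \<and> kd^2 > kp / b + kbar)}"

text \<open>PID control input u(t) = kp e(t) + ki \<integral>_0^t e + kd e'(t), with
  e = y* - x1 and e' = -x1' = -x2.\<close>
definition pid_input :: "real \<Rightarrow> real \<Rightarrow> real \<Rightarrow> real^'n \<Rightarrow>
    (real \<Rightarrow> real^'n) \<Rightarrow> (real \<Rightarrow> real^'n) \<Rightarrow> real \<Rightarrow> real^'n" where
  "pid_input kp ki kd y x1 x2 t =
     kp *\<^sub>R (y - x1 t) + ki *\<^sub>R integral {0..t} (\<lambda>s. y - x1 s) + kd *\<^sub>R (- x2 t)"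

definition closed_loop_solution :: "(real^'n \<Rightarrow> real^'n \<Rightarrow> real^'n \<Rightarrow> real^'n) \<Rightarrow>
    real \<Rightarrow> real \<Rightarrow> real \<Rightarrow> real^'n \<Rightarrow> real \<Rightarrow>
    (real \<Rightarrow> real^'n) \<Rightarrow> (real \<Rightarrow> real^'n) \<Rightarrow> bool" where
  "closed_loop_solution f kp ki kd y T x1 x2 \<longleftrightarrow>
     (\<forall>t\<in>{0..<T}.
        (x1 has_vector_derivative x2 t) (at t within {0..<T}) \<and>
        (x2 has_vector_derivative f (x1 t) (x2 t) (pid_input kp ki kd y x1 x2 t))
           (at t within {0..<T}))"

end

theory Submission
  imports Defs
begin

lemma lemB:
  fixes kp kd b L1 L2 E W H :: real
  assumes "E \<ge> 0" "W \<ge> 0" "0 \<le> H" "H \<le> L1*E + L2*W" "L1 \<ge> 0" "L2 \<ge> 0" "b > 0"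
    "(L1+L2)/b \<le> kp" "(L1+L2)/b \<le> kd" "kp > 0" "kd > 0"
  shows "(kp*E + kd*W)*H + H^2/(4*b) \<le> (L1+L2)*(kp+kd)*(E^2+W^2)"
proof (cases "W \<le> E")
  case True
  have H1: "H \<le> (L1+L2)*E" using assms True
    by (smt (verit, ccfv_SIG) distrib_right mult_left_mono)
  have "H^2/(4*b) = H*(H/b)/4" by (simp add: power2_eq_square)
  also have "\<dots> \<le> H*((L1+L2)*E/b)/4"
    using H1 assms by (intro divide_right_mono mult_left_mono) (auto simp: divide_right_mono)
  also have "\<dots> \<le> H*(kd*E)/4"
  proof -
    have "(L1+L2)/b*E \<le> kd*E" using assms by (intro mult_right_mono) auto
    then have "(L1+L2)*E/b \<le> kd*E" by simp
    then show ?thesis using assms by (intro divide_right_mono mult_left_mono) auto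
  qed
  finally have H2: "H^2/(4*b) \<le> H*(kd*E)/4" .
  have "(kp*E + kd*W)*H + H^2/(4*b) \<le> H*(kp*E + kd*W + kd*E/4)"
    using H2 by (simp add: algebra_simps)
  also have "\<dots> \<le> ((L1+L2)*E)*(kp*E + kd*W + kd*E/4)"
    using H1 assms by (intro mult_right_mono) auto
  also have "\<dots> \<le> (L1+L2)*(kp+kd)*(E^2+W^2)"
  proof -
    have "E*(kp*E + kd*W + kd*E/4) \<le> (kp+kd)*(E^2+W^2)"
    proof -
      have "0 \<le> kd*((W - E/2)^2 + E^2/2) + kp*W^2" using assms by auto
      then show ?thesis by (simp add: algebra_simps power2_eq_square)
    qed
    then show ?thesis using assms
      by (metis (no_types, lifting) add_nonneg_nonneg mult.assoc mult_left_mono)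
  qed
  finally show ?thesis .
next
  case False
  then have F: "E \<le> W" by simp
  have H1: "H \<le> (L1+L2)*W" using assms F
    by (smt (verit, ccfv_SIG) distrib_right mult_left_mono)
  have "H^2/(4*b) = H*(H/b)/4" by (simp add: power2_eq_square)
  also have "\<dots> \<le> H*((L1+L2)*W/b)/4"
    using H1 assms by (intro divide_right_mono mult_left_mono) (auto simp: divide_right_mono)
  also have "\<dots> \<le> H*(kp*W)/4"
  proof -
    have "(L1+L2)/b*W \<le> kp*W" using assms by (intro mult_right_mono) auto
    then have "(L1+L2)*W/b \<le> kp*W" by simp
    then show ?thesis using assms by (intro divide_right_mono mult_left_mono) auto
  qed
  finally have H2: "H^2/(4*b) \<le> H*(kp*W)/4" .
  have "(kp*E + kd*W)*H + H^2/(4*b) \<le> H*(kp*E + kd*W + kp*W/4)"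
    using H2 by (simp add: algebra_simps)
  also have "\<dots> \<le> ((L1+L2)*W)*(kp*E + kd*W + kp*W/4)"
    using H1 assms by (intro mult_right_mono) auto
  also have "\<dots> \<le> (L1+L2)*(kp+kd)*(E^2+W^2)"
  proof -
    have "W*(kp*E + kd*W + kp*W/4) \<le> (kp+kd)*(E^2+W^2)"
    proof -
      have "0 \<le> kp*((E - W/2)^2 + W^2/2) + kd*E^2" using assms by auto
      then show ?thesis by (simp add: algebra_simps power2_eq_square)
    qed
    then show ?thesis using assms
      by (metis (no_types, lifting) add_nonneg_nonneg mult.assoc mult_left_mono)
  qed
  finally show ?thesis .
qed

lemma lemA:
  fixes e v r k h s :: "'a::real_inner"
  assumes pos: "kp>0" "ki>0" "kd>0" "b>0" "L1\<ge>0" "L2\<ge>0"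
  and c1: "kp^2 > 2*ki*kd + (L1+L2)*(kp+kd)/b" and c2: "kd^2 > kp/b + (L1+L2)*(kp+kd)/b"
  and hq: "q = 2*kd*b*(kp^2 - ki*kd)/ki" and hp3: "p3 = 2*kp*kd*b/ki - 1" and hp1: "p1 = q*kp - ki*kd"
  and hs: "s = r - kd *\<^sub>R v"
  and rk: "r \<bullet> k \<ge> b * (r \<bullet> r)"
  and hb: "norm h \<le> L1*norm e + L2*norm v"
  and hg: "g = (2*kp*kd*b) *\<^sub>R e + (2*kd^2*b) *\<^sub>R v - kd *\<^sub>R h"
  shows "r \<bullet> (kp *\<^sub>R v + ki *\<^sub>R e - kd *\<^sub>R (k + h)) + p1*(e \<bullet> v)
          - q*(v \<bullet> s + e \<bullet> (kp *\<^sub>R v + ki *\<^sub>R e)) + p3*(s \<bullet> (kp *\<^sub>R v + ki *\<^sub>R e))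
    \<le> - (kd*b) * (norm (r - (1/(2*(kd*b))) *\<^sub>R g))^2
       - kd*b*(kp^2 - 2*ki*kd - (L1+L2)*(kp+kd)/b)*(norm e)^2
       - kd*b*(kd^2 - kp/b - (L1+L2)*(kp+kd)/b)*(norm v)^2"
proof -
  define D where "D = kd*b"
  have D: "D > 0" using pos by (simp add: D_def)
  have grp: "r \<bullet> (kp *\<^sub>R v + ki *\<^sub>R e - kd *\<^sub>R (k + h)) + p1*(e \<bullet> v)
          - q*(v \<bullet> s + e \<bullet> (kp *\<^sub>R v + ki *\<^sub>R e)) + p3*(s \<bullet> (kp *\<^sub>R v + ki *\<^sub>R e))
     = -kd*(r \<bullet> k) - kd*(r \<bullet> h) + (kp + p3*kp - q)*(r \<bullet> v) + (ki + p3*ki)*(r \<bullet> e)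
       + (p1 - q*kp - p3*ki*kd)*(e \<bullet> v) + (q*kd - p3*kp*kd)*(v \<bullet> v) - q*ki*(e \<bullet> e)"
    unfolding hs by (simp add: inner_simps inner_commute[of v r] inner_commute[of v e] inner_commute[of e r] algebra_simps)
  have k1: "kp + p3*kp - q = 2*kd^2*b" using pos unfolding hq hp3 by (simp add: field_simps power2_eq_square)
  have k2: "ki + p3*ki = 2*kp*kd*b" using pos unfolding hp3 by (simp add: field_simps)
  have k3: "p1 - q*kp - p3*ki*kd = -2*kp*kd^2*b" using pos unfolding hp1 hp3 by (simp add: field_simps power2_eq_square)
  have k4: "q*kd - p3*kp*kd = -(2*kd^2*b - kp)*kd" using pos unfolding hq hp3 by (simp add: field_simps power2_eq_square)
  have k5: "q*ki = 2*kd*b*(kp^2 - ki*kd)" using pos unfolding hq by simp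
  define E where "E = norm e"
  define W where "W = norm v"
  define H where "H = norm h"
  have rkk: "-kd*(r \<bullet> k) \<le> -D*(r \<bullet> r)" using rk pos unfolding D_def by simp
  have sq: "D * (norm (r - (1/(2*D)) *\<^sub>R g))^2 = D*(r \<bullet> r) - r \<bullet> g + (g \<bullet> g)/(4*D)"
  proof -
    have n2: "(norm (r - c *\<^sub>R g))^2 = r \<bullet> r - 2*c*(r \<bullet> g) + c*c*(g \<bullet> g)" for c
      by (simp only: power2_norm_eq_inner) (simp add: inner_simps inner_commute[of g r] algebra_simps)
    show ?thesis unfolding n2 using D by (simp add: field_simps)
  qed
  have rg: "r \<bullet> g = 2*kp*kd*b*(r \<bullet> e) + 2*kd^2*b*(r \<bullet> v) - kd*(r \<bullet> h)"
    unfolding hg by (simp add: inner_simps)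
  have gg: "g \<bullet> g = (2*kp*kd*b)^2*(e \<bullet> e) + 2*(2*kp*kd*b)*(2*kd^2*b)*(e \<bullet> v) + (2*kd^2*b)^2*(v \<bullet> v)
     - 2*kd*((2*kp*kd*b)*(e \<bullet> h) + (2*kd^2*b)*(v \<bullet> h)) + kd^2*(h \<bullet> h)"
    unfolding hg by (simp add: inner_simps inner_commute[of v e] inner_commute[of h e] inner_commute[of h v] algebra_simps power2_eq_square)
  have eh: "-(e \<bullet> h) \<le> E*H" unfolding E_def H_def
    using Cauchy_Schwarz_ineq2[of e h] by linarith
  have vh: "-(v \<bullet> h) \<le> W*H" unfolding W_def H_def
    using Cauchy_Schwarz_ineq2[of v h] by linarith
  have ggb: "g \<bullet> g \<le> (2*kp*kd*b)^2*E^2 + 2*(2*kp*kd*b)*(2*kd^2*b)*(e \<bullet> v) + (2*kd^2*b)^2*W^2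
     + 2*kd*((2*kp*kd*b)*(E*H) + (2*kd^2*b)*(W*H)) + kd^2*H^2"
  proof -
    have "- 2*kd*((2*kp*kd*b)*(e \<bullet> h) + (2*kd^2*b)*(v \<bullet> h)) \<le> 2*kd*((2*kp*kd*b)*(E*H) + (2*kd^2*b)*(W*H))"
    proof -
      have "(2*kp*kd*b)*(-(e \<bullet> h)) \<le> (2*kp*kd*b)*(E*H)" by (rule mult_left_mono[OF eh]) (use pos in simp)
      moreover have "(2*kd^2*b)*(-(v \<bullet> h)) \<le> (2*kd^2*b)*(W*H)" by (rule mult_left_mono[OF vh]) (use pos in simp)
      ultimately have "(2*kp*kd*b)*(-(e \<bullet> h)) + (2*kd^2*b)*(-(v \<bullet> h)) \<le> (2*kp*kd*b)*(E*H) + (2*kd^2*b)*(W*H)"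
        by (rule add_mono)
      then have "2*kd*((2*kp*kd*b)*(-(e \<bullet> h)) + (2*kd^2*b)*(-(v \<bullet> h))) \<le> 2*kd*((2*kp*kd*b)*(E*H) + (2*kd^2*b)*(W*H))"
        by (rule mult_left_mono) (use pos in simp)
      moreover have "- 2*kd*((2*kp*kd*b)*(e \<bullet> h) + (2*kd^2*b)*(v \<bullet> h)) = 2*kd*((2*kp*kd*b)*(-(e \<bullet> h)) + (2*kd^2*b)*(-(v \<bullet> h)))"
        by (simp only: mult_minus_right minus_add_distrib mult_minus_left distrib_left)
      ultimately show ?thesis by simp
    qed
    then show ?thesis unfolding gg E_def W_def H_def by (simp add: power2_norm_eq_inner)
  qed
  have ineq1: "(kp*E + kd*W)*H + H^2/(4*b) \<le> (L1+L2)*(kp+kd)*(E^2+W^2)"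
  proof (rule lemB)
    show "(L1+L2)/b \<le> kp"
    proof -
      have "(L1+L2)*(kp+kd)/b \<ge> (L1+L2)/b * kp" using pos
        by (simp add: divide_right_mono mult_left_mono)
      moreover have "0 < ki*kd" using pos by simp
      ultimately have "(L1+L2)/b * kp \<le> kp*kp" using c1 by (simp add: power2_eq_square)
      then show ?thesis by (rule mult_right_le_imp_le[OF _ pos(1)])
    qed
    show "(L1+L2)/b \<le> kd"
    proof -
      have "(L1+L2)*(kp+kd)/b \<ge> (L1+L2)/b * kd" using pos
        by (simp add: divide_right_mono mult_left_mono)
      then have "(L1+L2)/b * kd \<le> kd*kd" using c2 pos
        by (smt (verit, ccfv_SIG) divide_nonneg_pos power2_eq_square)
      then show ?thesis by (rule mult_right_le_imp_le[OF _ pos(3)])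
    qed
  qed (use pos hb in \<open>auto simp: E_def W_def H_def\<close>)
  have main: "- D*(r \<bullet> r) + r \<bullet> g + (-2*kp*kd^2*b)*(e \<bullet> v) + (-(2*kd^2*b - kp)*kd)*(v \<bullet> v) - q*ki*(e \<bullet> e)
      = - D * (norm (r - (1/(2*D)) *\<^sub>R g))^2 + (g \<bullet> g)/(4*D) + (-2*kp*kd^2*b)*(e \<bullet> v) + (-(2*kd^2*b - kp)*kd)*(v \<bullet> v) - q*ki*(e \<bullet> e)"
    using sq by simp
  have fin: "(g \<bullet> g)/(4*D) + (-2*kp*kd^2*b)*(e \<bullet> v) + (-(2*kd^2*b - kp)*kd)*(v \<bullet> v) - q*ki*(e \<bullet> e)
     \<le> - kd*b*(kp^2 - 2*ki*kd - (L1+L2)*(kp+kd)/b)*E^2 - kd*b*(kd^2 - kp/b - (L1+L2)*(kp+kd)/b)*W^2"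
  proof -
    have "(g \<bullet> g)/(4*D) \<le> ((2*kp*kd*b)^2*E^2 + 2*(2*kp*kd*b)*(2*kd^2*b)*(e \<bullet> v) + (2*kd^2*b)^2*W^2
     + 2*kd*((2*kp*kd*b)*(E*H) + (2*kd^2*b)*(W*H)) + kd^2*H^2)/(4*D)"
      using ggb D by (simp add: divide_right_mono)
    also have "\<dots> = kp^2*kd*b*E^2 + 2*kp*kd^2*b*(e \<bullet> v) + kd^3*b*W^2 + kd*((kp*E + kd*W)*H + H^2/(4*b))"
      using pos unfolding D_def by (simp add: field_simps power2_eq_square power3_eq_cube)
    finally have A: "(g \<bullet> g)/(4*D) \<le> kp^2*kd*b*E^2 + 2*kp*kd^2*b*(e \<bullet> v) + kd^3*b*W^2 + kd*((kp*E + kd*W)*H + H^2/(4*b))" .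
    have B: "kd*((kp*E + kd*W)*H + H^2/(4*b)) \<le> kd*((L1+L2)*(kp+kd)*(E^2+W^2))"
      using ineq1 pos by (intro mult_left_mono) auto
    have ee: "e \<bullet> e = E^2" "v \<bullet> v = W^2" by (simp_all add: E_def W_def dot_square_norm)
    have X: "q*ki*E^2 = 2*kd*b*(kp^2 - ki*kd)*E^2" using k5 by simp
    have "(g \<bullet> g)/(4*D) + (-2*kp*kd^2*b)*(e \<bullet> v) + (-(2*kd^2*b - kp)*kd)*(v \<bullet> v) - q*ki*(e \<bullet> e)
       = (g \<bullet> g)/(4*D) - 2*kp*kd^2*b*(e \<bullet> v) - (2*kd^2*b - kp)*kd*W^2 - 2*kd*b*(kp^2 - ki*kd)*E^2"
      unfolding ee X by (simp add: algebra_simps)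
    also have "\<dots> \<le> kp^2*kd*b*E^2 + kd^3*b*W^2 + kd*((kp*E + kd*W)*H + H^2/(4*b)) - (2*kd^2*b - kp)*kd*W^2 - 2*kd*b*(kp^2 - ki*kd)*E^2"
      using A by linarith
    also have "\<dots> \<le> kp^2*kd*b*E^2 + kd^3*b*W^2 + kd*((L1+L2)*(kp+kd)*(E^2+W^2)) - (2*kd^2*b - kp)*kd*W^2 - 2*kd*b*(kp^2 - ki*kd)*E^2"
      using B by linarith
    also have "\<dots> = - kd*b*(kp^2 - 2*ki*kd - (L1+L2)*(kp+kd)/b)*E^2 - kd*b*(kd^2 - kp/b - (L1+L2)*(kp+kd)/b)*W^2"
      using pos by (simp add: field_simps power2_eq_square power3_eq_cube)
    finally show ?thesis .
  qed
  have "r \<bullet> (kp *\<^sub>R v + ki *\<^sub>R e - kd *\<^sub>R (k + h)) + p1*(e \<bullet> v)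
          - q*(v \<bullet> s + e \<bullet> (kp *\<^sub>R v + ki *\<^sub>R e)) + p3*(s \<bullet> (kp *\<^sub>R v + ki *\<^sub>R e))
     \<le> - D*(r \<bullet> r) + r \<bullet> g + (-2*kp*kd^2*b)*(e \<bullet> v) + (-(2*kd^2*b - kp)*kd)*(v \<bullet> v) - q*ki*(e \<bullet> e)"
    unfolding grp k1 k2 k3 k4 rg using rkk by (simp add: algebra_simps)
  also have "\<dots> \<le> - D * (norm (r - (1/(2*D)) *\<^sub>R g))^2 - kd*b*(kp^2 - 2*ki*kd - (L1+L2)*(kp+kd)/b)*E^2 - kd*b*(kd^2 - kp/b - (L1+L2)*(kp+kd)/b)*W^2"
    unfolding main using fin by simp
  finally show ?thesis unfolding D_def E_def W_def by simp
qed

lemma Vlow: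
  fixes e r s v :: "'a::real_inner"
  assumes p1: "p1 > 0" and p3: "p3 > 0" and q: "q > 0" and det: "p1*p3 > q^2" and kd: "kd > 0"
    and hs: "s = r - kd *\<^sub>R v"
  defines "\<epsilon> \<equiv> (p1*p3 - q^2)/(p1+p3)"
  shows "min (\<epsilon>/2) (min 1 \<epsilon> * kd^2/4) * ((norm e)^2 + (norm v)^2)
     \<le> (r \<bullet> r)/2 + (p1*(e \<bullet> e) - 2*q*(e \<bullet> s) + p3*(s \<bullet> s))/2"
proof -
  define E where "E = norm e"
  define S where "S = norm s"
  define R where "R = norm r"
  define W where "W = norm v"
  have epos: "\<epsilon> > 0" unfolding \<epsilon>_def using det p1 p3 by simp
  have elt: "\<epsilon> < p1"
  proof -
    have "p1*p3 - q^2 < p1*(p1+p3)" using p1 q by (simp add: algebra_simps add_pos_nonneg)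
    then show ?thesis unfolding \<epsilon>_def using p1 p3 by (simp add: divide_less_eq)
  qed
  have eid: "(p1-\<epsilon>)*(p3-\<epsilon>) = q^2 + \<epsilon>^2"
  proof -
    have "\<epsilon>*(p1+p3) = p1*p3 - q^2" unfolding \<epsilon>_def using p1 p3 by simp
    then show ?thesis by (simp add: algebra_simps power2_eq_square)
  qed
  have quad: "\<epsilon>*(E^2 + S^2) \<le> p1*E^2 - 2*q*E*S + p3*S^2"
  proof -
    have "(p1-\<epsilon>)*(p1*E^2 - 2*q*E*S + p3*S^2 - \<epsilon>*(E^2 + S^2)) = ((p1-\<epsilon>)*E - q*S)^2 + \<epsilon>^2*S^2"
      using eid by (simp add: algebra_simps power2_eq_square)
    also have "\<dots> \<ge> 0" by simp
    finally have "0 \<le> (p1-\<epsilon>)*(p1*E^2 - 2*q*E*S + p3*S^2 - \<epsilon>*(E^2 + S^2))" .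
    then have "0 \<le> p1*E^2 - 2*q*E*S + p3*S^2 - \<epsilon>*(E^2 + S^2)" using elt
      by (simp add: zero_le_mult_iff)
    then show ?thesis by simp
  qed
  have es: "e \<bullet> s \<le> E*S" unfolding E_def S_def by (rule norm_cauchy_schwarz)
  have V1: "\<epsilon>*(E^2 + S^2) \<le> p1*(e \<bullet> e) - 2*q*(e \<bullet> s) + p3*(s \<bullet> s)"
  proof -
    have "q*(e \<bullet> s) \<le> q*(E*S)" using es q by (simp add: mult_left_mono)
    moreover have "e \<bullet> e = E^2" "s \<bullet> s = S^2" by (simp_all add: E_def S_def dot_square_norm)
    ultimately show ?thesis using quad by (simp add: algebra_simps)
  qed
  have rr: "r \<bullet> r = R^2" by (simp add: R_def dot_square_norm)
  have W2: "kd^2 * W^2 \<le> 2*R^2 + 2*S^2"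
  proof -
    have "kd *\<^sub>R v = r - s" using hs by simp
    then have "kd * W = norm (r - s)" unfolding W_def using kd by (metis abs_of_pos norm_scaleR)
    also have "\<dots> \<le> R + S" unfolding R_def S_def by (rule norm_triangle_ineq4)
    finally have "kd*W \<le> R + S" .
    moreover have "0 \<le> kd*W" using kd by (simp add: W_def)
    ultimately have "(kd*W)^2 \<le> (R+S)^2" by (rule power_mono)
    also have "\<dots> \<le> 2*R^2 + 2*S^2"
    proof -
      have "0 \<le> (R-S)^2" by simp
      then show ?thesis by (simp add: power2_eq_square algebra_simps)
    qed
    finally show ?thesis by (simp add: power_mult_distrib)
  qed
  define m where "m = min 1 \<epsilon>"
  have m: "m > 0" "m \<le> 1" "m \<le> \<epsilon>" using epos by (auto simp: m_def)
  have a1: "min (\<epsilon>/2) (m*kd^2/4) * E^2 \<le> (\<epsilon>/2)*E^2" by (rule mult_right_mono) auto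
  have a2: "min (\<epsilon>/2) (m*kd^2/4) * W^2 \<le> (m*kd^2/4)*W^2" by (rule mult_right_mono) auto
  have "min (\<epsilon>/2) (m * kd^2/4) * (E^2 + W^2) \<le> (\<epsilon>/2)*E^2 + (m*kd^2/4)*W^2"
    by (simp only: distrib_left) (rule add_mono[OF a1 a2])
  also have "\<dots> \<le> (\<epsilon>/2)*E^2 + (m/4)*(2*R^2 + 2*S^2)"
  proof -
    have "(m/4)*(kd^2*W^2) \<le> (m/4)*(2*R^2 + 2*S^2)" by (rule mult_left_mono[OF W2]) (use m in simp)
    then show ?thesis by simp
  qed
  also have "\<dots> \<le> R^2/2 + (\<epsilon>*(E^2 + S^2))/2"
  proof -
    have "m*R^2 \<le> R^2" using m by (simp add: mult_left_le_one_le)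
    moreover have "m*S^2 \<le> \<epsilon>*S^2" using m by (simp add: mult_right_mono)
    ultimately show ?thesis by (simp add: algebra_simps add_divide_distrib[symmetric] divide_right_mono)
  qed
  also have "\<dots> \<le> (r \<bullet> r)/2 + (p1*(e \<bullet> e) - 2*q*(e \<bullet> s) + p3*(s \<bullet> s))/2"
    using V1 rr by simp
  finally show ?thesis unfolding m_def E_def W_def .
qed

lemma param_facts:
  fixes kp ki kd b L1 L2 q p1 p3 :: real
  assumes pos: "kp>0" "ki>0" "kd>0" "b>0" "L1\<ge>0" "L2\<ge>0"
  and c1: "kp^2 > 2*ki*kd + (L1+L2)*(kp+kd)/b" and c2: "kd^2 > kp/b + (L1+L2)*(kp+kd)/b"
  and hq: "q = 2*kd*b*(kp^2 - ki*kd)/ki" and hp3: "p3 = 2*kp*kd*b/ki - 1" and hp1: "p1 = q*kp - ki*kd"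
  shows "q > 0" "p3 > 0" "p1 > 0" "p1*p3 > q^2" "kd*kp*b > 2*ki"
proof -
  have kb: "(L1+L2)*(kp+kd)/b \<ge> 0" using pos by simp
  have A: "kp^2 > 2*ki*kd" using c1 kb by linarith
  have B: "kd^2*b > kp"
  proof -
    have "kd^2 > kp/b" using c2 kb by linarith
    then show ?thesis using pos by (simp add: divide_less_eq mult.commute)
  qed
  have "kd^2*b*kp^2 > kp*(2*ki*kd)" using A B pos by (intro mult_strict_mono) auto
  then have "(kd*kp)*(kd*kp*b) > (kd*kp)*(2*ki)" by (simp add: power2_eq_square algebra_simps)
  then show C: "kd*kp*b > 2*ki" using pos by (simp add: mult_less_cancel_left_pos)
  have kikd: "ki*kd > 0" "2*ki*kd = 2*(ki*kd)" using pos by simp_all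
  have X: "kp^2 - ki*kd > 0" using A kikd by linarith
  show qp: "q > 0" unfolding hq using X pos by simp
  show "p3 > 0"
  proof -
    have "2*kp*kd*b/ki > 1" using C pos by (simp add: less_divide_eq algebra_simps)
    then show ?thesis unfolding hp3 by simp
  qed
  show "p1 > 0"
  proof -
    have "q*kp = 2*kd*b*kp*(kp^2 - ki*kd)/ki" unfolding hq by simp
    also have "\<dots> = (kd*kp*b)*(2*(kp^2 - ki*kd))/ki" by (simp add: algebra_simps)
    also have "\<dots> > (2*ki)*(2*(kp^2 - ki*kd))/ki"
      using C X pos by (intro divide_strict_right_mono mult_strict_right_mono) auto
    also have "(2*ki)*(2*(kp^2 - ki*kd))/ki = 4*(kp^2 - ki*kd)" using pos by simp
    finally have "q*kp > 4*(kp^2 - ki*kd)" .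
    moreover have "4*(kp^2 - ki*kd) > ki*kd" using A kikd by (smt (verit))
    ultimately show ?thesis unfolding hp1 by linarith
  qed
  show "p1*p3 > q^2"
  proof -
    define Xs where "Xs = kp^2 - ki*kd"
    have id: "ki^2*(p1*p3 - q^2) = kd*ki*(2*b*Xs*(2*b*kd^2 - kp) - 2*ki*kp*kd*b + ki^2)"
      unfolding hp1 hp3 hq Xs_def using pos by (simp add: field_simps power2_eq_square)
    have X2: "Xs > kp^2/2" unfolding Xs_def using A by linarith
    have Y2: "2*b*kd^2 - kp > b*kd^2" using B by (simp add: mult.commute)
    have "kp^2/2 > 0" using pos by simp
    then have Xp: "Xs > 0" using X2 by linarith
    have "(2*b*(kp^2/2))*(b*kd^2) < (2*b*Xs)*(2*b*kd^2 - kp)"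
    proof (rule mult_strict_mono)
      show "2*b*(kp^2/2) < 2*b*Xs" using X2 pos by simp
      show "b*kd^2 < 2*b*kd^2 - kp" using Y2 by simp
      show "0 < 2*b*Xs" using Xp pos by simp
      show "0 \<le> b*kd^2" using pos by simp
    qed
    moreover have "(2*b*(kp^2/2))*(b*kd^2) = (kd*kp*b)*(kd*kp*b)" by (simp add: power2_eq_square)
    moreover have "(kd*kp*b)*(kd*kp*b) \<ge> (kd*kp*b)*(2*ki)" using C pos by (intro mult_left_mono) auto
    moreover have "(kd*kp*b)*(2*ki) = 2*ki*kp*kd*b" by simp
    moreover have "ki^2 > 0" using pos by simp
    ultimately have "2*b*Xs*(2*b*kd^2 - kp) - 2*ki*kp*kd*b + ki^2 > 0" by linarith
    then have "ki^2*(p1*p3 - q^2) > 0" unfolding id using pos by simp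
    then show ?thesis using pos by (simp add: zero_less_mult_iff)
  qed
qed

lemma Vup:
  fixes e r s v :: "'a::real_inner"
  assumes p1: "p1 \<ge> 0" and p3: "p3 \<ge> 0" and q: "q \<ge> 0" and hs: "s = r - kd *\<^sub>R v"
  shows "(r \<bullet> r)/2 + (p1*(e \<bullet> e) - 2*q*(e \<bullet> s) + p3*(s \<bullet> s))/2
     \<le> (1 + 2*(q+p3) + (p1+q) + 2*kd^2*(q+p3))/2 * ((norm r)^2 + (norm e)^2 + (norm v)^2)"
proof -
  define E where "E = norm e"
  define S where "S = norm s"
  define R where "R = norm r"
  define W where "W = norm v"
  have ee: "e \<bullet> e = E^2" "s \<bullet> s = S^2" "r \<bullet> r = R^2" by (simp_all add: E_def S_def R_def dot_square_norm)
  have es: "-(e \<bullet> s) \<le> E*S" unfolding E_def S_def using Cauchy_Schwarz_ineq2[of e s] by linarith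
  have es2: "2*(E*S) \<le> E^2 + S^2"
  proof -
    have "0 \<le> (E-S)^2" by simp
    then show ?thesis by (simp add: power2_eq_square algebra_simps)
  qed
  have t1: "-2*q*(e \<bullet> s) \<le> q*(E^2 + S^2)"
  proof -
    have "q*(-(e \<bullet> s)) \<le> q*(E*S)" by (rule mult_left_mono[OF es q])
    moreover have "q*(2*(E*S)) \<le> q*(E^2 + S^2)" by (rule mult_left_mono[OF es2 q])
    ultimately show ?thesis by simp
  qed
  have S2: "S^2 \<le> 2*R^2 + 2*kd^2*W^2"
  proof -
    have "S \<le> R + \<bar>kd\<bar>*W" unfolding S_def R_def W_def hs
      by (metis norm_scaleR norm_triangle_ineq4)
    moreover have "0 \<le> S" by (simp add: S_def)
    ultimately have "S^2 \<le> (R + \<bar>kd\<bar>*W)^2" by (rule power_mono)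
    also have "\<dots> \<le> 2*R^2 + 2*kd^2*W^2"
    proof -
      have "0 \<le> (R - \<bar>kd\<bar>*W)^2" by simp
      then show ?thesis by (simp add: power2_eq_square algebra_simps)
    qed
    finally show ?thesis .
  qed
  have t2: "(q+p3)*S^2 \<le> (q+p3)*(2*R^2 + 2*kd^2*W^2)" by (rule mult_left_mono[OF S2]) (use q p3 in simp)
  have "(r \<bullet> r)/2 + (p1*(e \<bullet> e) - 2*q*(e \<bullet> s) + p3*(s \<bullet> s))/2 \<le> (R^2 + (p1+q)*E^2 + (q+p3)*S^2)/2"
    using t1 unfolding ee by (simp add: algebra_simps divide_right_mono)
  also have "\<dots> \<le> (R^2 + (p1+q)*E^2 + (q+p3)*(2*R^2 + 2*kd^2*W^2))/2"
    using t2 by simp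
  also have "\<dots> = ((1 + 2*(q+p3))*R^2 + (p1+q)*E^2 + (2*kd^2*(q+p3))*W^2)/2"
    by (simp add: algebra_simps)
  also have "\<dots> \<le> (1 + 2*(q+p3) + (p1+q) + 2*kd^2*(q+p3))/2 * (R^2 + E^2 + W^2)"
  proof -
    define K where "K = 1 + 2*(q+p3) + (p1+q) + 2*kd^2*(q+p3)"
    have a: "(1 + 2*(q+p3))*R^2 \<le> K*R^2" unfolding K_def using p1 p3 q by (intro mult_right_mono) auto
    have b: "(p1+q)*E^2 \<le> K*E^2" unfolding K_def using p1 p3 q by (intro mult_right_mono) auto
    have c: "(2*kd^2*(q+p3))*W^2 \<le> K*W^2" unfolding K_def using p1 p3 q by (intro mult_right_mono) auto
    have "(1 + 2*(q+p3))*R^2 + (p1+q)*E^2 + (2*kd^2*(q+p3))*W^2 \<le> K*(R^2 + E^2 + W^2)"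
      using a b c by (simp add: distrib_left)
    then show ?thesis unfolding K_def by simp
  qed
  finally show ?thesis unfolding R_def E_def W_def .
qed

lemma sq2: "(x+y)^2 \<le> 2*x^2 + 2*(y::real)^2"
proof -
  have "0 \<le> (x-y)^2" by simp
  then show ?thesis by (simp add: power2_eq_square algebra_simps)
qed

lemma lyap:
  fixes kp ki kd b L1 L2 q p1 p3 :: real
  assumes pos: "kp>0" "ki>0" "kd>0" "b>0" "L1\<ge>0" "L2\<ge>0"
  and c1: "kp^2 > 2*ki*kd + (L1+L2)*(kp+kd)/b" and c2: "kd^2 > kp/b + (L1+L2)*(kp+kd)/b"
  and hq: "q = 2*kd*b*(kp^2 - ki*kd)/ki" and hp3: "p3 = 2*kp*kd*b/ki - 1" and hp1: "p1 = q*kp - ki*kd"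
  shows "\<exists>\<gamma>>0. \<forall>(e::'a::real_inner) v r k h. b*(r \<bullet> r) \<le> r \<bullet> k \<longrightarrow> norm h \<le> L1*norm e + L2*norm v \<longrightarrow>
     r \<bullet> (kp *\<^sub>R v + ki *\<^sub>R e - kd *\<^sub>R (k + h)) + p1*(e \<bullet> v)
       - q*(v \<bullet> (r - kd *\<^sub>R v) + e \<bullet> (kp *\<^sub>R v + ki *\<^sub>R e)) + p3*((r - kd *\<^sub>R v) \<bullet> (kp *\<^sub>R v + ki *\<^sub>R e))
     \<le> -\<gamma> * ((r \<bullet> r)/2 + (p1*(e \<bullet> e) - 2*q*(e \<bullet> (r - kd *\<^sub>R v)) + p3*((r - kd *\<^sub>R v) \<bullet> (r - kd *\<^sub>R v)))/2)"
proof -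
  note pf = param_facts[OF pos c1 c2 hq hp3 hp1]
  define D where "D = kd*b"
  define \<delta> where "\<delta> = min (kp^2 - 2*ki*kd - (L1+L2)*(kp+kd)/b) (kd^2 - kp/b - (L1+L2)*(kp+kd)/b)"
  define c where "c = D*\<delta>"
  define a' where "a' = 2*kp*kd*b + kd*L1"
  define b' where "b' = 2*kd^2*b + kd*L2"
  define K1 where "K1 = (a'^2 + b'^2)/D^2"
  define \<theta> where "\<theta> = c/(c + D*K1)"
  define \<mu> where "\<mu> = min (\<theta>*D/2) (c/2)"
  define K3 where "K3 = 1 + 2*(q+p3) + (p1+q) + 2*kd^2*(q+p3)"
  have D: "D > 0" unfolding D_def using pos by simp
  have \<delta>: "\<delta> > 0" unfolding \<delta>_def using c1 c2 by simp
  have c: "c > 0" unfolding c_def using D \<delta> by simp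
  have K1: "K1 \<ge> 0" unfolding K1_def by simp
  have \<theta>: "\<theta> > 0" "\<theta> \<le> 1" "\<theta>*D*K1 \<le> c"
  proof -
    have dk: "D*K1 \<ge> 0" using D K1 by simp
    show "\<theta> > 0" unfolding \<theta>_def using c dk by simp
    show "\<theta> \<le> 1" unfolding \<theta>_def using c dk by simp
    have "\<theta>*D*K1 = c*(D*K1)/(c + D*K1)" unfolding \<theta>_def by simp
    also have "\<dots> \<le> c" using c dk by (simp add: divide_le_eq mult_left_mono)
    finally show "\<theta>*D*K1 \<le> c" .
  qed
  have \<mu>: "\<mu> > 0" unfolding \<mu>_def using \<theta> D c by simp
  have K3: "K3 > 0" unfolding K3_def using pf by (simp add: add_pos_nonneg)
  show ?thesis
  proof (intro exI[of _ "2*\<mu>/K3"] conjI allI impI)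
    show "2*\<mu>/K3 > 0" using \<mu> K3 by simp
    fix e v r k h :: 'a
    assume rk: "b*(r \<bullet> r) \<le> r \<bullet> k" and hb: "norm h \<le> L1*norm e + L2*norm v"
    define s where "s = r - kd *\<^sub>R v"
    define g where "g = (2*kp*kd*b) *\<^sub>R e + (2*kd^2*b) *\<^sub>R v - kd *\<^sub>R h"
    define \<rho> where "\<rho> = r - (1/(2*(kd*b))) *\<^sub>R g"
    define E where "E = norm e"
    define W where "W = norm v"
    define R where "R = norm r"
    define Z where "Z = E^2 + W^2"
    define Vd where "Vd = r \<bullet> (kp *\<^sub>R v + ki *\<^sub>R e - kd *\<^sub>R (k + h)) + p1*(e \<bullet> v)
       - q*(v \<bullet> s + e \<bullet> (kp *\<^sub>R v + ki *\<^sub>R e)) + p3*(s \<bullet> (kp *\<^sub>R v + ki *\<^sub>R e))"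
    define V where "V = (r \<bullet> r)/2 + (p1*(e \<bullet> e) - 2*q*(e \<bullet> s) + p3*(s \<bullet> s))/2"
    have A: "Vd \<le> - (kd*b) * (norm \<rho>)^2
       - kd*b*(kp^2 - 2*ki*kd - (L1+L2)*(kp+kd)/b)*E^2
       - kd*b*(kd^2 - kp/b - (L1+L2)*(kp+kd)/b)*W^2"
      unfolding Vd_def \<rho>_def E_def W_def
      by (rule lemA[OF pos c1 c2 hq hp3 hp1 s_def _ hb g_def]) (use rk in simp)
    have A2: "Vd \<le> - D*(norm \<rho>)^2 - c*Z"
    proof -
      have "kd*b*(kp^2 - 2*ki*kd - (L1+L2)*(kp+kd)/b)*E^2 \<ge> D*\<delta>*E^2"
        unfolding D_def \<delta>_def using pos by (intro mult_right_mono mult_left_mono) auto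
      moreover have "kd*b*(kd^2 - kp/b - (L1+L2)*(kp+kd)/b)*W^2 \<ge> D*\<delta>*W^2"
        unfolding D_def \<delta>_def using pos by (intro mult_right_mono mult_left_mono) auto
      ultimately show ?thesis using A unfolding c_def Z_def D_def by (simp add: algebra_simps)
    qed
    have gb: "norm g \<le> a'*E + b'*W"
    proof -
      have "norm g \<le> norm ((2*kp*kd*b) *\<^sub>R e) + norm ((2*kd^2*b) *\<^sub>R v) + norm (kd *\<^sub>R h)"
        unfolding g_def using norm_triangle_ineq4[of "(2*kp*kd*b) *\<^sub>R e + (2*kd^2*b) *\<^sub>R v" "kd *\<^sub>R h"]
          norm_triangle_ineq[of "(2*kp*kd*b) *\<^sub>R e" "(2*kd^2*b) *\<^sub>R v"] by linarith
      also have "\<dots> = 2*kp*kd*b*E + 2*kd^2*b*W + kd*norm h"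
        using pos by (simp add: E_def W_def)
      also have "\<dots> \<le> 2*kp*kd*b*E + 2*kd^2*b*W + kd*(L1*E + L2*W)"
        using mult_left_mono[OF hb, of kd] pos by (simp add: E_def W_def)
      also have "\<dots> = a'*E + b'*W" unfolding a'_def b'_def by (simp add: algebra_simps)
      finally show ?thesis .
    qed
    have Rb: "R^2 \<le> 2*(norm \<rho>)^2 + K1*Z"
    proof -
      have "r = \<rho> + (1/(2*D)) *\<^sub>R g" unfolding \<rho>_def D_def by simp
      then have "R \<le> norm \<rho> + norm g/(2*D)"
      proof -
        have "norm r \<le> norm \<rho> + norm ((1/(2*D)) *\<^sub>R g)" using \<open>r = _\<close> norm_triangle_ineq by metis
        also have "norm ((1/(2*D)) *\<^sub>R g) = norm g/(2*D)" using D by simp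
        finally show ?thesis unfolding R_def .
      qed
      moreover have "norm g/(2*D) \<le> (a'*E + b'*W)/(2*D)" using gb D by (simp add: divide_right_mono)
      ultimately have R1: "R \<le> norm \<rho> + (a'*E + b'*W)/(2*D)" by simp
      have "R^2 \<le> (norm \<rho> + (a'*E + b'*W)/(2*D))^2"
        using R1 by (rule power_mono) (simp add: R_def)
      also have "\<dots> \<le> 2*(norm \<rho>)^2 + 2*((a'*E + b'*W)/(2*D))^2"
        by (rule sq2)
      also have "2*((a'*E + b'*W)/(2*D))^2 \<le> K1*Z"
      proof -
        have "(a'*E + b'*W)^2 \<le> 2*(a'^2 + b'^2)*Z"
        proof -
          have "(a'*E + b'*W)^2 \<le> 2*(a'*E)^2 + 2*(b'*W)^2" by (rule sq2)
          also have "\<dots> = 2*a'^2*E^2 + 2*b'^2*W^2" by (simp add: power_mult_distrib)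
          also have "\<dots> \<le> 2*a'^2*E^2 + 2*b'^2*W^2 + (2*a'^2*W^2 + 2*b'^2*E^2)" by simp
          also have "\<dots> = 2*(a'^2 + b'^2)*Z" unfolding Z_def by (simp add: algebra_simps)
          finally show ?thesis .
        qed
        then have "(a'*E + b'*W)^2/(2*D^2) \<le> (2*(a'^2 + b'^2)*Z)/(2*D^2)"
          by (rule divide_right_mono) (use D in simp)
        moreover have "2*((a'*E + b'*W)/(2*D))^2 = (a'*E + b'*W)^2/(2*D^2)"
          by (simp add: power_divide power2_eq_square)
        moreover have "(2*(a'^2 + b'^2)*Z)/(2*D^2) = K1*Z" unfolding K1_def using D by (simp add: field_simps)
        ultimately show ?thesis by simp
      qed
      finally show ?thesis by simp
    qed
    have B: "Vd \<le> - \<mu>*(R^2 + Z)"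
    proof -
      have "D*(norm \<rho>)^2 \<ge> \<theta>*D*(norm \<rho>)^2" using \<theta> D by (simp add: mult_left_le_one_le)
      then have "Vd \<le> - \<theta>*D*(norm \<rho>)^2 - c*Z" using A2 by simp
      moreover have "\<theta>*D*(norm \<rho>)^2 \<ge> \<theta>*D*((R^2 - K1*Z)/2)"
        using Rb \<theta> D by (intro mult_left_mono) auto
      ultimately have "Vd \<le> - (\<theta>*D/2)*R^2 + (\<theta>*D*K1/2 - c)*Z"
        by (simp add: algebra_simps)
      also have "\<dots> \<le> - (\<theta>*D/2)*R^2 - (c/2)*Z"
      proof -
        have "(\<theta>*D*K1/2 - c)*Z \<le> (-(c/2))*Z"
          using \<theta>(3) by (intro mult_right_mono) (auto simp: Z_def)
        then show ?thesis by simp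
      qed
      also have "\<dots> \<le> - \<mu>*R^2 - \<mu>*Z"
      proof -
        have "\<mu>*R^2 \<le> (\<theta>*D/2)*R^2" unfolding \<mu>_def by (intro mult_right_mono) auto
        moreover have "\<mu>*Z \<le> (c/2)*Z" unfolding \<mu>_def Z_def by (intro mult_right_mono) auto
        ultimately show ?thesis by simp
      qed
      finally show ?thesis by (simp add: algebra_simps)
    qed
    have C: "V \<le> K3/2 * (R^2 + Z)"
      unfolding V_def K3_def R_def Z_def E_def W_def
      using Vup[OF _ _ _ s_def, of p1 p3 q e] pf by (simp add: add.assoc)
    have "Vd \<le> -(2*\<mu>/K3) * V"
    proof -
      have "(2*\<mu>/K3) * V \<le> (2*\<mu>/K3) * (K3/2 * (R^2 + Z))"
        using C \<mu> K3 by (intro mult_left_mono) auto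
      also have "\<dots> = \<mu>*(R^2 + Z)" using K3 by simp
      finally show ?thesis using B by simp
    qed
    then show "r \<bullet> (kp *\<^sub>R v + ki *\<^sub>R e - kd *\<^sub>R (k + h)) + p1*(e \<bullet> v)
       - q*(v \<bullet> (r - kd *\<^sub>R v) + e \<bullet> (kp *\<^sub>R v + ki *\<^sub>R e)) + p3*((r - kd *\<^sub>R v) \<bullet> (kp *\<^sub>R v + ki *\<^sub>R e))
     \<le> -(2*\<mu>/K3) * ((r \<bullet> r)/2 + (p1*(e \<bullet> e) - 2*q*(e \<bullet> (r - kd *\<^sub>R v)) + p3*((r - kd *\<^sub>R v) \<bullet> (r - kd *\<^sub>R v)))/2)"
      unfolding Vd_def V_def s_def .
  qed
qed

lemma psd_bound:
  fixes J :: "real^'n^'n"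
  assumes "mat_ge (Sym J) (b *\<^sub>R mat 1)"
  shows "b * (v \<bullet> v) \<le> v \<bullet> (J *v v)"
proof -
  have h0: "0 \<le> v \<bullet> ((Sym J - b *\<^sub>R mat 1) *v v)" using assms unfolding mat_ge_def psd_def by blast
  have h1: "(Sym J - b *\<^sub>R mat 1) *v v = (1/2) *\<^sub>R (J *v v) + (1/2) *\<^sub>R (transpose J *v v) - b *\<^sub>R v"
    unfolding Sym_def
    by (simp add: matrix_vector_mult_diff_rdistrib matrix_vector_mult_add_rdistrib
        scaleR_matrix_vector_assoc[symmetric] scaleR_add_right)
  have h2: "v \<bullet> (transpose J *v v) = v \<bullet> (J *v v)"
    by (simp add: inner_commute[of v "v v* J"] dot_lmul_matrix)
  have "0 \<le> (1/2) * (v \<bullet> (J *v v)) + (1/2) * (v \<bullet> (transpose J *v v)) - b * (v \<bullet> v)"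
    using h0 unfolding h1 by (simp only: inner_diff_right inner_add_right inner_scaleR_right)
  then show ?thesis unfolding h2 by simp
qed

lemma Fclass_props:
  fixes f :: "real^'n \<Rightarrow> real^'n \<Rightarrow> real^'n \<Rightarrow> real^'n"
  assumes "f \<in> F_class L1 L2 b"
  shows "\<And>x1 x2 u u'. b * (norm (u - u'))^2 \<le> (u - u') \<bullet> (f x1 x2 u - f x1 x2 u')"
    and "\<And>x1 x1' x2 u. norm (f x1 x2 u - f x1' x2 u) \<le> L1 * norm (x1 - x1')"
    and "\<And>x1 x2 x2' u. norm (f x1 x2 u - f x1 x2' u) \<le> L2 * norm (x2 - x2')"
    and "\<And>x1 x2. continuous_on UNIV (f x1 x2)"
proof -
  obtain J1 J2 J3 :: "real^'n \<Rightarrow> real^'n \<Rightarrow> real^'n \<Rightarrow> real^'n^'n" where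
    Fd: "\<And>x1 x2 u. ((\<lambda>(a, c, d). f a c d) has_derivative
          (\<lambda>(h1, h2, h3). J1 x1 x2 u *v h1 + J2 x1 x2 u *v h2 + J3 x1 x2 u *v h3)) (at (x1, x2, u))"
    and bnd: "\<And>x1 x2 u. opnorm (J1 x1 x2 u) \<le> L1 \<and> opnorm (J2 x1 x2 u) \<le> L2 \<and>
                  mat_ge (Sym (J3 x1 x2 u)) (b *\<^sub>R mat 1)"
    using assms unfolding F_class_def by blast
  have d3: "((\<lambda>d. f x1 x2 d) has_derivative (\<lambda>h. J3 x1 x2 u *v h)) (at u)" for x1 x2 u
  proof -
    have "((\<lambda>d. (x1, x2, d)) has_derivative (\<lambda>h. (0, 0, h))) (at u)"
      by (auto intro!: derivative_eq_intros)
    from has_derivative_compose[OF this Fd[of x1 x2 u]] show ?thesis by simp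
  qed
  have d1: "((\<lambda>a. f a x2 u) has_derivative (\<lambda>h. J1 a x2 u *v h)) (at a)" for a x2 u
  proof -
    have "((\<lambda>a. (a, x2, u)) has_derivative (\<lambda>h. (h, 0, 0))) (at a)"
      by (auto intro!: derivative_eq_intros simp: zero_prod_def)
    from has_derivative_compose[OF this Fd[of a x2 u]] show ?thesis by simp
  qed
  have d2: "((\<lambda>c. f x1 c u) has_derivative (\<lambda>h. J2 x1 c u *v h)) (at c)" for x1 c u
  proof -
    have "((\<lambda>c. (x1, c, u)) has_derivative (\<lambda>h. (0, h, 0))) (at c)"
      by (auto intro!: derivative_eq_intros)
    from has_derivative_compose[OF this Fd[of x1 c u]] show ?thesis by simp
  qed
  show "norm (f x1 x2 u - f x1' x2 u) \<le> L1 * norm (x1 - x1')" for x1 x1' x2 u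
    by (rule differentiable_bound[of UNIV "\<lambda>a. f a x2 u" "\<lambda>a h. J1 a x2 u *v h"])
       (use d1 bnd in \<open>auto simp: opnorm_def\<close>)
  show "norm (f x1 x2 u - f x1 x2' u) \<le> L2 * norm (x2 - x2')" for x1 x2 x2' u
    by (rule differentiable_bound[of UNIV "\<lambda>c. f x1 c u" "\<lambda>c h. J2 x1 c u *v h"])
       (use d2 bnd in \<open>auto simp: opnorm_def\<close>)
  show "continuous_on UNIV (f x1 x2)" for x1 x2
    using d3 by (metis differentiable_def differentiable_imp_continuous_on differentiable_on_def
        has_derivative_at_withinI)
  show "b * (norm (u - u'))^2 \<le> (u - u') \<bullet> (f x1 x2 u - f x1 x2 u')" for x1 x2 u u'
  proof -
    define d where "d = u - u'"
    define \<phi> where "\<phi> = (\<lambda>t::real. d \<bullet> f x1 x2 (u' + t *\<^sub>R d))"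
    have der: "(\<phi> has_derivative (\<lambda>h. d \<bullet> (J3 x1 x2 (u' + t *\<^sub>R d) *v (h *\<^sub>R d)))) (at t within {0..1})" for t
    proof -
      have "((\<lambda>t. u' + t *\<^sub>R d) has_derivative (\<lambda>h. h *\<^sub>R d)) (at t within {0..1})"
        by (auto intro!: derivative_eq_intros)
      from has_derivative_compose[OF this d3[of x1 x2 "u' + t *\<^sub>R d"]]
      have "((\<lambda>t. f x1 x2 (u' + t *\<^sub>R d)) has_derivative (\<lambda>h. J3 x1 x2 (u' + t *\<^sub>R d) *v (h *\<^sub>R d))) (at t within {0..1})" .
      then show ?thesis unfolding \<phi>_def by (rule has_derivative_inner_right)
    qed
    obtain \<xi> where "\<phi> 1 - \<phi> 0 = d \<bullet> (J3 x1 x2 (u' + \<xi> *\<^sub>R d) *v ((1 - 0) *\<^sub>R d))"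
      using mvt_simple[of 0 1 \<phi>, OF _ der] by auto
    then have "\<phi> 1 - \<phi> 0 = d \<bullet> (J3 x1 x2 (u' + \<xi> *\<^sub>R d) *v d)" by simp
    moreover have "b * (d \<bullet> d) \<le> d \<bullet> (J3 x1 x2 (u' + \<xi> *\<^sub>R d) *v d)"
      using bnd psd_bound by blast
    moreover have "\<phi> 1 - \<phi> 0 = d \<bullet> (f x1 x2 u - f x1 x2 u')"
      unfolding \<phi>_def d_def by (simp add: inner_diff_right)
    ultimately show ?thesis unfolding d_def by (simp add: dot_square_norm)
  qed
qed

lemma zero_exists:
  fixes g :: "'a::euclidean_space \<Rightarrow> 'a"
  assumes cont: "continuous_on UNIV g"
    and mono: "\<And>u u'. b * (norm (u - u'))^2 \<le> (u - u') \<bullet> (g u - g u')" and b: "b > 0"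
  shows "\<exists>u. g u = 0"
proof (rule ccontr)
  assume nz: "\<not> (\<exists>u. g u = 0)"
  then have nz': "norm (g u) > 0" for u by auto
  define R where "R = norm (g 0)/b"
  have R: "R > 0" unfolding R_def using nz' b by simp
  define \<phi> where "\<phi> = (\<lambda>u. (-R/norm (g u)) *\<^sub>R g u)"
  have cphi: "continuous_on (cball 0 R) \<phi>"
    unfolding \<phi>_def using nz'
    by (intro continuous_intros continuous_on_subset[OF cont]) auto
  have nphi: "norm (\<phi> u) = R" for u
    unfolding \<phi>_def using nz'[of u] R by simp
  have im: "\<phi> \<in> cball 0 R \<rightarrow> cball 0 R" using nphi by auto
  obtain u where u: "u \<in> cball 0 R" "\<phi> u = u"
    using brouwer[OF compact_cball convex_cball _ cphi im] R by auto
  have nu: "norm u = R" using nphi[of u] u(2) by simp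
  have ug: "u \<bullet> g u = - R * norm (g u)"
  proof -
    have "u \<bullet> g u = \<phi> u \<bullet> g u" using u(2) by simp
    also have "\<dots> = (-R/norm (g u)) * (g u \<bullet> g u)" unfolding \<phi>_def by simp
    also have "\<dots> = - R * norm (g u)" using nz'[of u] by (simp add: dot_square_norm power2_eq_square)
    finally show ?thesis .
  qed
  have "b * R^2 \<le> u \<bullet> g u - u \<bullet> g 0" using mono[of u 0] nu by (simp add: inner_diff_right)
  moreover have "- (u \<bullet> g 0) \<le> R * norm (g 0)" using Cauchy_Schwarz_ineq2[of u "g 0"] nu by (simp add: abs_le_iff)
  moreover have "R * norm (g 0) = b * R^2" unfolding R_def using b by (simp add: power2_eq_square)
  ultimately have "0 \<le> u \<bullet> g u" by linarith
  then have "0 \<le> - R * norm (g u)" using ug by simp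
  moreover have "R * norm (g u) > 0" using R nz'[of u] by simp
  ultimately show False by simp
qed

lemma zero_unique:
  fixes g :: "'a::real_inner \<Rightarrow> 'a"
  assumes mono: "\<And>u u'. b * (norm (u - u'))^2 \<le> (u - u') \<bullet> (g u - g u')" and b: "b > 0"
    and "g u = 0" "g v = 0"
  shows "v = u"
proof -
  have "b * (norm (v - u))^2 \<le> 0" using mono[of v u] assms by simp
  then have "(norm (v - u))^2 \<le> 0" using b by (simp add: mult_le_0_iff)
  then show ?thesis by simp
qed

lemma V_hasderiv:
  fixes e v r :: "real \<Rightarrow> 'a::real_inner"
  assumes de: "(e has_vector_derivative e') (at t within S)"
    and dv: "(v has_vector_derivative v') (at t within S)"
    and dr: "(r has_vector_derivative r') (at t within S)"
  shows "((\<lambda>t. (r t \<bullet> r t)/2 + (p1*(e t \<bullet> e t) - 2*q*(e t \<bullet> (r t - kd *\<^sub>R v t))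
            + p3*((r t - kd *\<^sub>R v t) \<bullet> (r t - kd *\<^sub>R v t)))/2) has_real_derivative
        (r t \<bullet> r' + p1*(e t \<bullet> e') - q*(e' \<bullet> (r t - kd *\<^sub>R v t) + e t \<bullet> (r' - kd *\<^sub>R v'))
            + p3*((r t - kd *\<^sub>R v t) \<bullet> (r' - kd *\<^sub>R v')))) (at t within S)"
proof -
  have ds: "((\<lambda>t. r t - kd *\<^sub>R v t) has_vector_derivative (r' - kd *\<^sub>R v')) (at t within S)"
    using dr dv by (auto intro!: derivative_eq_intros)
  have i1: "((\<lambda>t. a t \<bullet> c t) has_real_derivative (a' \<bullet> c t + a t \<bullet> c')) (at t within S)"
    if "(a has_vector_derivative a') (at t within S)" "(c has_vector_derivative c') (at t within S)"
    for a c :: "real \<Rightarrow> 'a" and a' c'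
  proof -
    have "((\<lambda>t. a t \<bullet> c t) has_derivative (\<lambda>h. a t \<bullet> (h *\<^sub>R c') + (h *\<^sub>R a') \<bullet> c t)) (at t within S)"
      using that unfolding has_vector_derivative_def by (rule has_derivative_inner)
    then show ?thesis unfolding has_field_derivative_def
      by (rule has_derivative_eq_rhs) (auto simp: fun_eq_iff algebra_simps inner_commute)
  qed
  have rr: "((\<lambda>t. r t \<bullet> r t) has_real_derivative (r' \<bullet> r t + r t \<bullet> r')) (at t within S)" by (rule i1[OF dr dr])
  have ee: "((\<lambda>t. e t \<bullet> e t) has_real_derivative (e' \<bullet> e t + e t \<bullet> e')) (at t within S)" by (rule i1[OF de de])
  have es: "((\<lambda>t. e t \<bullet> (r t - kd *\<^sub>R v t)) has_real_derivative (e' \<bullet> (r t - kd *\<^sub>R v t) + e t \<bullet> (r' - kd *\<^sub>R v'))) (at t within S)"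
    by (rule i1[OF de ds])
  have ss: "((\<lambda>t. (r t - kd *\<^sub>R v t) \<bullet> (r t - kd *\<^sub>R v t)) has_real_derivative
      ((r' - kd *\<^sub>R v') \<bullet> (r t - kd *\<^sub>R v t) + (r t - kd *\<^sub>R v t) \<bullet> (r' - kd *\<^sub>R v'))) (at t within S)"
    by (rule i1[OF ds ds])
  have "((\<lambda>t. (r t \<bullet> r t)/2 + (p1*(e t \<bullet> e t) - 2*q*(e t \<bullet> (r t - kd *\<^sub>R v t))
            + p3*((r t - kd *\<^sub>R v t) \<bullet> (r t - kd *\<^sub>R v t)))/2) has_real_derivative
        ((r' \<bullet> r t + r t \<bullet> r')/2 + (p1*(e' \<bullet> e t + e t \<bullet> e') - 2*q*(e' \<bullet> (r t - kd *\<^sub>R v t) + e t \<bullet> (r' - kd *\<^sub>R v'))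
            + p3*((r' - kd *\<^sub>R v') \<bullet> (r t - kd *\<^sub>R v t) + (r t - kd *\<^sub>R v t) \<bullet> (r' - kd *\<^sub>R v')))/2)) (at t within S)"
    by (intro DERIV_add DERIV_diff DERIV_cmult DERIV_cdivide rr ee es ss)
  then show ?thesis by (rule DERIV_cong) (simp add: inner_simps inner_commute field_simps)
qed

lemma exp_decay:
  fixes V V' :: "real \<Rightarrow> real"
  assumes t0: "t0 \<ge> 0"
    and dV: "\<And>t. t \<in> {0..t0} \<Longrightarrow> (V has_real_derivative V' t) (at t within {0..t0})"
    and neg: "\<And>t. t \<in> {0..t0} \<Longrightarrow> V' t \<le> -\<gamma> * V t"
  shows "V t0 \<le> V 0 * exp (-\<gamma>*t0)"
proof (cases "t0 = 0")
  case True then show ?thesis by simp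
next
  case False
  then have tp: "0 < t0" using t0 by simp
  define \<phi> where "\<phi> = (\<lambda>t. exp (\<gamma>*t) * V t)"
  have d\<phi>: "(\<phi> has_derivative (\<lambda>h. h * (exp (\<gamma>*t) * (\<gamma> * V t + V' t)))) (at t within {0..t0})"
    if "0 \<le> t" "t \<le> t0" for t
  proof -
    have "(\<phi> has_real_derivative (\<gamma> * exp (\<gamma>*t) * V t + exp (\<gamma>*t) * V' t)) (at t within {0..t0})"
      unfolding \<phi>_def using dV[of t] that by (auto intro!: derivative_eq_intros)
    then show ?thesis unfolding has_field_derivative_def
      by (rule has_derivative_eq_rhs) (auto simp: fun_eq_iff algebra_simps)
  qed
  obtain \<xi> where \<xi>: "\<xi> \<in> {0<..<t0}" and eq: "\<phi> t0 - \<phi> 0 = (t0 - 0) * (exp (\<gamma>*\<xi>) * (\<gamma> * V \<xi> + V' \<xi>))"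
    using mvt_simple[OF tp d\<phi>] by blast
  have "\<gamma> * V \<xi> + V' \<xi> \<le> 0" using neg[of \<xi>] \<xi> by simp
  then have "(t0 - 0) * (exp (\<gamma>*\<xi>) * (\<gamma> * V \<xi> + V' \<xi>)) \<le> 0"
    using tp by (simp add: mult_nonneg_nonpos)
  then have "\<phi> t0 \<le> \<phi> 0" using eq by simp
  then have "exp (\<gamma>*t0) * V t0 \<le> V 0" unfolding \<phi>_def by simp
  then have "exp (-\<gamma>*t0) * (exp (\<gamma>*t0) * V t0) \<le> exp (-\<gamma>*t0) * V 0"
    by (intro mult_left_mono) auto
  then show ?thesis by (simp add: exp_minus field_simps)
qed

definition LVf :: "real \<Rightarrow> real \<Rightarrow> real \<Rightarrow> real \<Rightarrow> 'a::real_inner \<Rightarrow> 'a \<Rightarrow> 'a \<Rightarrow> real" where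
  "LVf p1 q p3 kd e v r = (r \<bullet> r)/2 + (p1*(e \<bullet> e) - 2*q*(e \<bullet> (r - kd *\<^sub>R v))
      + p3*((r - kd *\<^sub>R v) \<bullet> (r - kd *\<^sub>R v)))/2"

lemma traj:
  fixes f :: "real^'n \<Rightarrow> real^'n \<Rightarrow> real^'n \<Rightarrow> real^'n" and y ustar :: "real^'n"
  assumes mono: "\<And>x1 x2 u u'. b * (norm (u - u'))^2 \<le> (u - u') \<bullet> (f x1 x2 u - f x1 x2 u')"
    and lip1: "\<And>x1 x1' x2 u. norm (f x1 x2 u - f x1' x2 u) \<le> L1 * norm (x1 - x1')"
    and lip2: "\<And>x1 x2 x2' u. norm (f x1 x2 u - f x1 x2' u) \<le> L2 * norm (x2 - x2')"
    and fz: "f y 0 ustar = 0"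
    and Lg: "\<And>(e::real^'n) v r k h. b*(r \<bullet> r) \<le> r \<bullet> k \<Longrightarrow> norm h \<le> L1*norm e + L2*norm v \<Longrightarrow>
     r \<bullet> (kp *\<^sub>R v + ki *\<^sub>R e - kd *\<^sub>R (k + h)) + p1*(e \<bullet> v)
       - q*(v \<bullet> (r - kd *\<^sub>R v) + e \<bullet> (kp *\<^sub>R v + ki *\<^sub>R e)) + p3*((r - kd *\<^sub>R v) \<bullet> (kp *\<^sub>R v + ki *\<^sub>R e))
     \<le> -\<gamma> * LVf p1 q p3 kd e v r"
    and sol: "closed_loop_solution f kp ki kd y T x1 x2"
    and t: "t \<in> {0..<T}"
  shows "LVf p1 q p3 kd (y - x1 t) (- x2 t) (pid_input kp ki kd y x1 x2 t - ustar)
     \<le> LVf p1 q p3 kd (y - x1 0) (- x2 0) (pid_input kp ki kd y x1 x2 0 - ustar) * exp (-\<gamma>*t)"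
proof -
  define S where "S = {0..t}"
  have SsubT: "S \<subseteq> {0..<T}" using t by (auto simp: S_def)
  define e where "e = (\<lambda>s. y - x1 s)"
  define v where "v = (\<lambda>s. - x2 s)"
  define I where "I = (\<lambda>s. integral {0..s} e)"
  define w where "w = (\<lambda>s. f (x1 s) (x2 s) (pid_input kp ki kd y x1 x2 s))"
  define r where "r = (\<lambda>s. pid_input kp ki kd y x1 x2 s - ustar)"
  have rform: "r = (\<lambda>s. kp *\<^sub>R e s + ki *\<^sub>R I s + kd *\<^sub>R v s - ustar)"
    unfolding r_def pid_input_def e_def v_def I_def by simp
  have dx1: "(x1 has_vector_derivative x2 s) (at s within S)" if "s \<in> S" for s
    using sol that SsubT unfolding closed_loop_solution_def
    by (meson has_vector_derivative_within_subset subsetD)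
  have dx2: "(x2 has_vector_derivative w s) (at s within S)" if "s \<in> S" for s
    using sol that SsubT unfolding closed_loop_solution_def w_def
    by (meson has_vector_derivative_within_subset subsetD)
  have de: "(e has_vector_derivative v s) (at s within S)" if "s \<in> S" for s
    unfolding e_def v_def using dx1[OF that] by (auto intro!: derivative_eq_intros)
  have dv: "(v has_vector_derivative - w s) (at s within S)" if "s \<in> S" for s
    unfolding v_def using dx2[OF that] by (auto intro!: derivative_eq_intros)
  have conte: "continuous_on S e"
  proof -
    have "continuous (at s within S) e" if "s \<in> S" for s
      using de[OF that] by (rule has_vector_derivative_continuous)
    then show ?thesis by (simp add: continuous_on_eq_continuous_within)
  qed
  have dI: "(I has_vector_derivative e s) (at s within S)" if "s \<in> S" for s
    unfolding I_def using integral_has_vector_derivative[OF conte[unfolded S_def]] that S_def by simp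
  have dr: "(r has_vector_derivative (kp *\<^sub>R v s + ki *\<^sub>R e s - kd *\<^sub>R w s)) (at s within S)" if "s \<in> S" for s
    unfolding rform using de[OF that] dI[OF that] dv[OF that]
    by (auto intro!: derivative_eq_intros simp: algebra_simps)
  define Vf where "Vf = (\<lambda>s. LVf p1 q p3 kd (e s) (v s) (r s))"
  define Vd where "Vd = (\<lambda>s. r s \<bullet> (kp *\<^sub>R v s + ki *\<^sub>R e s - kd *\<^sub>R w s) + p1*(e s \<bullet> v s)
       - q*(v s \<bullet> (r s - kd *\<^sub>R v s) + e s \<bullet> ((kp *\<^sub>R v s + ki *\<^sub>R e s - kd *\<^sub>R w s) - kd *\<^sub>R (- w s)))
       + p3*((r s - kd *\<^sub>R v s) \<bullet> ((kp *\<^sub>R v s + ki *\<^sub>R e s - kd *\<^sub>R w s) - kd *\<^sub>R (- w s))))"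
  have dV: "(Vf has_real_derivative Vd s) (at s within S)" if "s \<in> S" for s
    unfolding Vf_def Vd_def LVf_def
    using V_hasderiv[OF de[OF that] dv[OF that] dr[OF that], of p1 q kd p3] by simp
  have neg: "Vd s \<le> -\<gamma> * Vf s" if "s \<in> S" for s
  proof -
    define k where "k = w s - f (x1 s) (x2 s) ustar"
    define h where "h = f (x1 s) (x2 s) ustar"
    have kh: "w s = k + h" unfolding k_def h_def by simp
    have rk: "b*(r s \<bullet> r s) \<le> r s \<bullet> k"
      using mono[of "pid_input kp ki kd y x1 x2 s" ustar "x1 s" "x2 s"]
      unfolding k_def w_def r_def by (simp add: dot_square_norm)
    have hb: "norm h \<le> L1*norm (e s) + L2*norm (v s)"
    proof -
      have "h = (f (x1 s) (x2 s) ustar - f y (x2 s) ustar) + (f y (x2 s) ustar - f y 0 ustar)"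
        unfolding h_def using fz by simp
      then have "norm h \<le> norm (f (x1 s) (x2 s) ustar - f y (x2 s) ustar) + norm (f y (x2 s) ustar - f y 0 ustar)"
        by (metis norm_triangle_ineq)
      also have "\<dots> \<le> L1 * norm (x1 s - y) + L2 * norm (x2 s - 0)"
        using lip1 lip2 by (rule add_mono)
      also have "\<dots> = L1*norm (e s) + L2*norm (v s)"
        unfolding e_def v_def by (simp add: norm_minus_commute)
      finally show ?thesis .
    qed
    have "Vd s = r s \<bullet> (kp *\<^sub>R v s + ki *\<^sub>R e s - kd *\<^sub>R (k + h)) + p1*(e s \<bullet> v s)
       - q*(v s \<bullet> (r s - kd *\<^sub>R v s) + e s \<bullet> (kp *\<^sub>R v s + ki *\<^sub>R e s)) + p3*((r s - kd *\<^sub>R v s) \<bullet> (kp *\<^sub>R v s + ki *\<^sub>R e s))"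
      unfolding Vd_def kh[symmetric] by simp
    also have "\<dots> \<le> -\<gamma> * Vf s" unfolding Vf_def by (rule Lg[OF rk hb])
    finally show ?thesis .
  qed
  have "Vf t \<le> Vf 0 * exp (-\<gamma>*t)"
    by (rule exp_decay[of t Vf Vd]) (use t dV neg in \<open>auto simp: S_def\<close>)
  then show ?thesis unfolding Vf_def e_def v_def r_def .
qed

theorem theorem3p1:
  fixes L1 L2 b kp ki kd :: real
  assumes "L1 > 0" and "L2 > 0" and "b > 0"
    and "(kp, ki, kd) \<in> Omega_pid L1 L2 b"
  shows "\<exists>M > 0. \<exists>lam > 0.
     \<forall>f \<in> (F_class L1 L2 b :: (real^'n \<Rightarrow> real^'n \<Rightarrow> real^'n \<Rightarrow> real^'n) set).
     \<forall>y :: real^'n. \<exists>ustar.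
        f y 0 ustar = 0 \<and> (\<forall>v. f y 0 v = 0 \<longrightarrow> v = ustar) \<and>
        (\<forall>T x1 x2. closed_loop_solution f kp ki kd y T x1 x2 \<longrightarrow>
           (\<forall>t\<in>{0..<T}. norm (y - x1 t) + norm (- x2 t)
              \<le> M * exp (- lam * t) * (norm (y - x1 0) + norm (- x2 0) + norm ustar)))"
proof -
  have om: "0 < kp" "0 < ki" "0 < kd" "kp^2 > 2*ki*kd + (L1+L2)*(kp+kd)/b" "kd^2 > kp/b + (L1+L2)*(kp+kd)/b"
    using assms(4) unfolding Omega_pid_def Let_def by auto
  have pos: "kp>0" "ki>0" "kd>0" "b>0" "L1\<ge>0" "L2\<ge>0" using om assms by auto
  note c1 = om(4) and c2 = om(5)
  define q where "q = 2*kd*b*(kp^2 - ki*kd)/ki"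
  define p3 where "p3 = 2*kp*kd*b/ki - 1"
  define p1 where "p1 = q*kp - ki*kd"
  note pf = param_facts[OF pos c1 c2 q_def p3_def p1_def]
  obtain \<gamma> where \<gamma>: "\<gamma> > 0" and Lg0: "\<forall>(e::real^'n) v r k h. b*(r \<bullet> r) \<le> r \<bullet> k \<longrightarrow> norm h \<le> L1*norm e + L2*norm v \<longrightarrow>
     r \<bullet> (kp *\<^sub>R v + ki *\<^sub>R e - kd *\<^sub>R (k + h)) + p1*(e \<bullet> v)
       - q*(v \<bullet> (r - kd *\<^sub>R v) + e \<bullet> (kp *\<^sub>R v + ki *\<^sub>R e)) + p3*((r - kd *\<^sub>R v) \<bullet> (kp *\<^sub>R v + ki *\<^sub>R e))
     \<le> -\<gamma> * ((r \<bullet> r)/2 + (p1*(e \<bullet> e) - 2*q*(e \<bullet> (r - kd *\<^sub>R v)) + p3*((r - kd *\<^sub>R v) \<bullet> (r - kd *\<^sub>R v)))/2)"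
    using lyap[OF pos c1 c2 q_def p3_def p1_def] by blast
  have Lg: "\<And>(e::real^'n) v r k h. b*(r \<bullet> r) \<le> r \<bullet> k \<Longrightarrow> norm h \<le> L1*norm e + L2*norm v \<Longrightarrow>
     r \<bullet> (kp *\<^sub>R v + ki *\<^sub>R e - kd *\<^sub>R (k + h)) + p1*(e \<bullet> v)
       - q*(v \<bullet> (r - kd *\<^sub>R v) + e \<bullet> (kp *\<^sub>R v + ki *\<^sub>R e)) + p3*((r - kd *\<^sub>R v) \<bullet> (kp *\<^sub>R v + ki *\<^sub>R e))
     \<le> -\<gamma> * LVf p1 q p3 kd e v r"
    using Lg0 unfolding LVf_def by blast
  define \<epsilon> where "\<epsilon> = (p1*p3 - q^2)/(p1+p3)"
  define cl where "cl = min (\<epsilon>/2) (min 1 \<epsilon> * kd^2/4)"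
  define K3 where "K3 = 1 + 2*(q+p3) + (p1+q) + 2*kd^2*(q+p3)"
  define km where "km = kp + kd + 1"
  define M where "M = sqrt (K3*(km^2+1)/cl)"
  have \<epsilon>: "\<epsilon> > 0" unfolding \<epsilon>_def using pf by simp
  have cl: "cl > 0" unfolding cl_def using \<epsilon> pos by simp
  have K3: "K3 > 0" unfolding K3_def using pf by (simp add: add_pos_nonneg)
  have km: "km > 0" unfolding km_def using pos by simp
  have k1: "km^2 + 1 > 0" using zero_le_power2[of km] by linarith
  have Kp: "K3*(km^2+1)/cl > 0" using K3 k1 cl by (intro divide_pos_pos mult_pos_pos)
  have M: "M > 0" unfolding M_def using Kp by simp
  have M2: "M^2 = K3*(km^2+1)/cl" unfolding M_def using Kp by simp
  have main: "\<forall>f \<in> (F_class L1 L2 b :: (real^'n \<Rightarrow> real^'n \<Rightarrow> real^'n \<Rightarrow> real^'n) set).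
     \<forall>y :: real^'n. \<exists>ustar.
        f y 0 ustar = 0 \<and> (\<forall>v. f y 0 v = 0 \<longrightarrow> v = ustar) \<and>
        (\<forall>T x1 x2. closed_loop_solution f kp ki kd y T x1 x2 \<longrightarrow>
           (\<forall>t\<in>{0..<T}. norm (y - x1 t) + norm (- x2 t)
              \<le> M * exp (- (\<gamma>/2) * t) * (norm (y - x1 0) + norm (- x2 0) + norm ustar)))"
  proof (intro ballI allI)
    fix f :: "real^'n \<Rightarrow> real^'n \<Rightarrow> real^'n \<Rightarrow> real^'n" and y :: "real^'n"
    assume fF: "f \<in> F_class L1 L2 b"
    note FP = Fclass_props[OF fF]
    have gm: "\<And>u u'. b*(norm (u - u'))^2 \<le> (u - u') \<bullet> (f y 0 u - f y 0 u')" using FP(1) by blast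
    obtain ustar where fz: "f y 0 ustar = 0"
      using zero_exists[of "f y 0" b] gm FP(4) pos by blast
    show "\<exists>ustar. f y 0 ustar = 0 \<and> (\<forall>v. f y 0 v = 0 \<longrightarrow> v = ustar) \<and>
        (\<forall>T x1 x2. closed_loop_solution f kp ki kd y T x1 x2 \<longrightarrow>
           (\<forall>t\<in>{0..<T}. norm (y - x1 t) + norm (- x2 t)
              \<le> M * exp (- (\<gamma>/2) * t) * (norm (y - x1 0) + norm (- x2 0) + norm ustar)))"
    proof (intro exI[of _ ustar] conjI allI impI ballI)
      show "f y 0 ustar = 0" by (rule fz)
      show "v = ustar" if "f y 0 v = 0" for v
        using zero_unique[of b "f y 0" ustar v] gm pos fz that by blast
      fix T x1 x2 t
      assume sol: "closed_loop_solution f kp ki kd y T x1 x2" and t: "t \<in> {0..<T}"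
      have dec: "LVf p1 q p3 kd (y - x1 t) (- x2 t) (pid_input kp ki kd y x1 x2 t - ustar)
        \<le> LVf p1 q p3 kd (y - x1 0) (- x2 0) (pid_input kp ki kd y x1 x2 0 - ustar) * exp (-\<gamma>*t)"
        by (rule traj[OF FP(1) FP(2) FP(3) fz Lg sol t])
      define E where "E = norm (y - x1 t)"
      define W where "W = norm (- x2 t)"
      define E0 where "E0 = norm (y - x1 0)"
      define W0 where "W0 = norm (- x2 0)"
      define U where "U = norm ustar"
      define S0 where "S0 = E0 + W0 + U"
      define r0 where "r0 = pid_input kp ki kd y x1 x2 0 - ustar"
      have low: "cl*(E^2 + W^2) \<le> LVf p1 q p3 kd (y - x1 t) (- x2 t) (pid_input kp ki kd y x1 x2 t - ustar)"
        unfolding LVf_def cl_def \<epsilon>_def E_def W_def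
        by (rule Vlow) (use pf pos in auto)
      have up: "LVf p1 q p3 kd (y - x1 0) (- x2 0) r0 \<le> K3/2 * ((norm r0)^2 + E0^2 + W0^2)"
        unfolding LVf_def K3_def E0_def W0_def
        by (rule Vup) (use pf in auto)
      have r0b: "norm r0 \<le> km * S0"
      proof -
        have r0eq: "r0 = kp *\<^sub>R (y - x1 0) + kd *\<^sub>R (- x2 0) - ustar"
          unfolding r0_def pid_input_def by simp
        have "norm r0 \<le> norm (kp *\<^sub>R (y - x1 0)) + norm (kd *\<^sub>R (- x2 0)) + norm ustar"
          unfolding r0eq using norm_triangle_ineq4[of "kp *\<^sub>R (y - x1 0) + kd *\<^sub>R (- x2 0)" ustar]
            norm_triangle_ineq[of "kp *\<^sub>R (y - x1 0)" "kd *\<^sub>R (- x2 0)"] by linarith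
        also have "\<dots> = kp*E0 + kd*W0 + U" unfolding E0_def W0_def U_def using pos by simp
        finally have "norm r0 \<le> kp*E0 + kd*W0 + U" .
        also have "\<dots> \<le> km * S0" unfolding km_def S0_def E0_def W0_def U_def using pos
          by (simp add: algebra_simps add_nonneg_nonneg mult_nonneg_nonneg)
        finally show ?thesis .
      qed
      have S0: "S0 \<ge> 0" "E0 \<ge> 0" "W0 \<ge> 0" "U \<ge> 0" by (auto simp: S0_def E0_def W0_def U_def)
      have "(norm r0)^2 + E0^2 + W0^2 \<le> (km^2 + 1) * S0^2"
      proof -
        have "(norm r0)^2 \<le> (km*S0)^2" using r0b by (rule power_mono) simp
        moreover have "E0^2 + W0^2 \<le> S0^2" unfolding S0_def using S0
          by (simp add: power2_eq_square algebra_simps add_nonneg_nonneg mult_nonneg_nonneg)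
        ultimately show ?thesis by (simp add: power_mult_distrib algebra_simps)
      qed
      then have up2: "LVf p1 q p3 kd (y - x1 0) (- x2 0) r0 \<le> K3/2 * ((km^2 + 1) * S0^2)"
      proof -
        have "K3/2 * ((norm r0)^2 + E0^2 + W0^2) \<le> K3/2 * ((km^2 + 1) * S0^2)"
          using \<open>(norm r0)^2 + E0^2 + W0^2 \<le> (km^2 + 1) * S0^2\<close> K3 by (intro mult_left_mono) auto
        then show ?thesis using up by linarith
      qed
      have "(E + W)^2 \<le> 2*(E^2 + W^2)" using sq2[of E W] by simp
      also have "\<dots> \<le> 2 * (LVf p1 q p3 kd (y - x1 0) (- x2 0) r0 * exp (-\<gamma>*t)) / cl"
      proof -
        have "cl*(E^2+W^2) \<le> LVf p1 q p3 kd (y - x1 0) (- x2 0) r0 * exp (-\<gamma>*t)"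
          using low dec unfolding r0_def by linarith
        then show ?thesis using cl by (simp add: field_simps)
      qed
      also have "\<dots> \<le> 2 * (K3/2 * ((km^2 + 1) * S0^2) * exp (-\<gamma>*t)) / cl"
      proof -
        have "LVf p1 q p3 kd (y - x1 0) (- x2 0) r0 * exp (-\<gamma>*t) \<le> K3/2 * ((km^2 + 1) * S0^2) * exp (-\<gamma>*t)"
          by (rule mult_right_mono[OF up2]) simp
        then have "2 * (LVf p1 q p3 kd (y - x1 0) (- x2 0) r0 * exp (-\<gamma>*t)) \<le> 2 * (K3/2 * ((km^2 + 1) * S0^2) * exp (-\<gamma>*t))"
          by simp
        then show ?thesis using cl by (rule divide_right_mono[OF _ less_imp_le])
      qed
      also have "\<dots> = (M * exp (- (\<gamma>/2) * t) * S0)^2"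
      proof -
        have "(exp (- (\<gamma>/2) * t))^2 = exp (-\<gamma>*t)" by (simp add: exp_double[symmetric] power2_eq_square exp_add[symmetric])
        then show ?thesis unfolding power_mult_distrib M2 using cl by (simp add: field_simps)
      qed
      finally have "(E + W)^2 \<le> (M * exp (- (\<gamma>/2) * t) * S0)^2" .
      then have "E + W \<le> M * exp (- (\<gamma>/2) * t) * S0"
        by (rule power2_le_imp_le) (use M S0 in simp)
      then show "norm (y - x1 t) + norm (- x2 t) \<le> M * exp (- (\<gamma>/2) * t) * (norm (y - x1 0) + norm (- x2 0) + norm ustar)"
        unfolding E_def W_def S0_def E0_def W0_def U_def .
    qed
  qed
  show ?thesis
    apply (rule exI[of _ M])
    apply (rule conjI[OF M])
    apply (rule exI[of _ "\<gamma>/2"])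
    using \<gamma> main by simp
qed

end
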